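(* Let $p\ge 2$, $0\le t\le1$ and $u>0$. Then the $p^2\times p^2$ real matrix $B$ defined below has rank exactly $p^2-1$.
   Context: Let $p\ge 2$ be an integer, $0\le t\le 1$ and $u>0$. Consider $p^2$ unknowns $p_{i,j}$, $1\le i,j\le p$; these represent the DASEP$(3,p,2)$ stationary probabilities $\mathrm{Pd}(0,i,j)$. For $1\le i,j\le p$ define the linear form $$A_{i,j}=\big(c_{i,j}+[i>1]+[j>1]+u[i<p]+u[j<p]\big)p_{i,j}-d_{i,j}\,p_{j,i}-[i<p]\,p_{i+1,j}-[j<p]\,p_{i,j+1}-u[i>1]\,p_{i-1,j}-u[j>1]\,p_{i,j-1}.$$ Here $[\cdot]$ is the Iverson bracket. The coefficients are $c_{i,j}=2+t$ and $d_{i,j}=1+2t$ if $i<j$; $c_{i,j}=1+2t$ and $d_{i,j}=2+t$ if $i>j$; and $c_{i,i}=d_{i,i}=0$. For example, for $1<i<j<p$ this reads $A_{i,j}=(4+t+2u)p_{i,j}-(1+2t)p_{j,i}-p_{i+1,j}-p_{i,j+1}-up_{i-1,j}-up_{i,j-1}$. For $1<j<i<p$ it reads $A_{i,j}=(3+2t+2u)p_{i,j}-(2+t)p_{j,i}-p_{i+1,j}-p_{i,j+1}-up_{i-1,j}-up_{i,j-1}$. For $i=j=1$ it reads $A_{1,1}=2u\,p_{1,1}-p_{2,1}-p_{1,2}$. The matrix $B$ has rows and columns indexed by pairs, with entries $B_{p(i_1-1)+j_1,\;p(i_2-1)+j_2}$ equal to the coefficient of $p_{i_1,j_1}$ in $A_{i_2,j_2}$.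 *)

theory Defs
  imports "Jordan_Normal_Form.DL_Rank"
begin

definition iv :: "bool \<Rightarrow> real" where "iv b = (if b then 1 else 0)"

definition cc :: "real \<Rightarrow> nat \<Rightarrow> nat \<Rightarrow> real" where
  "cc t i j = (if i < j then 2 + t else if j < i then 1 + 2*t else 0)"

definition dd :: "real \<Rightarrow> nat \<Rightarrow> nat \<Rightarrow> real" where
  "dd t i j = (if i < j then 1 + 2*t else if j < i then 2 + t else 0)"

(* coeffA p t u i j k l = coefficient of the unknown p_{k,l} in the linear form A_{i,j}
   (all indices 1-based, 1 <= i,j,k,l <= p). Contributions from coinciding unknowns add up
   (only relevant for i = j, where d_{i,i} = 0 anyway). *)
definition coeffA :: "nat \<Rightarrow> real \<Rightarrow> real \<Rightarrow> nat \<Rightarrow> nat \<Rightarrow> nat \<Rightarrow> nat \<Rightarrow> real" where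
  "coeffA p t u i j k l =
     iv (k = i \<and> l = j) * (cc t i j + iv (i > 1) + iv (j > 1) + u * iv (i < p) + u * iv (j < p))
   - iv (k = j \<and> l = i) * dd t i j
   - iv (i < p \<and> k = i + 1 \<and> l = j)
   - iv (j < p \<and> k = i \<and> l = j + 1)
   - u * iv (i > 1 \<and> k + 1 = i \<and> l = j)
   - u * iv (j > 1 \<and> k = i \<and> l + 1 = j)"

(* The p^2 x p^2 matrix B, 0-based: row index r corresponds to (i1,j1) with
   r = p*(i1-1) + (j1-1), column index c to (i2,j2) likewise;
   B(r,c) = coefficient of p_{i1,j1} in A_{i2,j2}. *)
definition matB :: "nat \<Rightarrow> real \<Rightarrow> real \<Rightarrow> real mat" where
  "matB p t u = mat (p^2) (p^2)
     (\<lambda>(r, c). coeffA p t u (c div p + 1) (c mod p + 1) (r div p + 1) (r mod p + 1))"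

end

theory Submission imports Defs "Jordan_Normal_Form.DL_Rank_Submatrix" begin


lemma pick_lessThan: "(i::nat) < m \<Longrightarrow> pick {..<m} i = i"
proof -
  assume "i < m"
  have "card {a\<in>{..<m}. a < i} = i" proof -
    have "{a\<in>{..<m}. a < i} = {..<i}" using \<open>i<m\<close> by auto
    then show ?thesis by simp
  qed
  then show ?thesis using pick_card_in_set[of i "{..<m}"] \<open>i<m\<close> by simp
qed

lemma gen_rank:
  fixes B :: "real mat" and m :: nat
  assumes B: "B \<in> carrier_mat (Suc m) (Suc m)"
  and offd: "\<And>r c. r < Suc m \<Longrightarrow> c < Suc m \<Longrightarrow> c \<noteq> r \<Longrightarrow> B$$(r,c) \<le> 0"
  and rowsum: "\<And>r. r < Suc m \<Longrightarrow> (\<Sum>c<Suc m. B$$(r,c)) = 0"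
  and up: "\<And>r. r < m \<Longrightarrow> \<exists>c. r < c \<and> c \<le> m \<and> B$$(r,c) < 0"
  shows "vec_space.rank (Suc m) B = m"
proof -
  interpret vec_space "TYPE(real)" "Suc m" .
  have "det B = 0"
  proof -
    let ?v = "vec (Suc m) (\<lambda>_. 1::real)"
    have "B *\<^sub>v ?v = 0\<^sub>v (Suc m)"
    proof
      show "dim_vec (B *\<^sub>v ?v) = dim_vec (0\<^sub>v (Suc m))" using B by simp
      fix r assume "r < dim_vec (0\<^sub>v (Suc m))"
      then have r: "r < Suc m" by simp
      have "(B *\<^sub>v ?v) $ r = (\<Sum>c<Suc m. B$$(r,c))"
        using B r by (simp add: scalar_prod_def lessThan_atLeast0)
      then show "(B *\<^sub>v ?v) $ r = 0\<^sub>v (Suc m) $ r" using rowsum[OF r] r by simp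
    qed
    moreover have "?v \<noteq> 0\<^sub>v (Suc m)"
      by (metis index_vec index_zero_vec(1) zero_less_Suc zero_neq_one)
    moreover have "?v \<in> carrier_vec (Suc m)" by simp
    ultimately show ?thesis using det_0_iff_vec_prod_zero_field[OF B] by blast
  qed
  then have upper: "rank B < Suc m" using det_zero_low_rank[OF B] by simp
  define Mm where "Mm = submatrix B {..<m} {..<m}"
  have cardm: "card {i. i < Suc m \<and> i \<in> {..<m}} = m"
  proof -
    have "{i. i < Suc m \<and> i \<in> {..<m}} = {..<m}" by auto
    then show ?thesis by simp
  qed
  have dr: "dim_row B = Suc m" "dim_col B = Suc m" using B by auto
  have Mc: "Mm \<in> carrier_mat m m"
    by (rule carrier_matI; unfold Mm_def dim_submatrix dr; rule cardm)
  have Mi: "Mm $$ (i,j) = B $$ (i,j)" if "i < m" "j < m" for i j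
  proof -
    have "Mm $$ (i,j) = B $$ (pick {..<m} i, pick {..<m} j)" unfolding Mm_def
      by (rule submatrix_index; unfold dr cardm; rule that)
    then show ?thesis using that by (simp add: pick_lessThan)
  qed
  have "det Mm \<noteq> 0"
  proof
    assume "det Mm = 0"
    then obtain v where v: "v \<in> carrier_vec m" "v \<noteq> 0\<^sub>v m" "Mm *\<^sub>v v = 0\<^sub>v m"
      using det_0_iff_vec_prod_zero_field[OF Mc] by auto
    define w where "w c = (if c < m then v $ c else 0)" for c
    define a where "a = Max ((\<lambda>c. \<bar>v $ c\<bar>) ` {..<m})"
    have "\<exists>c<m. v $ c \<noteq> 0"
    proof (rule ccontr)
      assume "\<not> (\<exists>c<m. v $ c \<noteq> 0)"
      then have "v = 0\<^sub>v m" using v(1) by (intro eq_vecI) auto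
      with v(2) show False by simp
    qed
    then obtain c1 where c1: "c1 < m" "v $ c1 \<noteq> 0" by blast
    have mpos: "m > 0" using c1 by simp
    have a1: "\<bar>v $ c1\<bar> \<le> a" unfolding a_def using c1 by (intro Max_ge) auto
    have a_ge: "\<bar>w c\<bar> \<le> a" for c
    proof (cases "c < m")
      case True
      then show ?thesis unfolding w_def a_def by (simp add: Max_ge)
    next
      case False
      then show ?thesis unfolding w_def using a1 by simp
    qed
    have apos: "a > 0" using a_ge[of c1] c1 unfolding w_def by simp
    define S where "S = {c. c < m \<and> \<bar>v $ c\<bar> = a}"
    have "S \<noteq> {}"
    proof -
      have "a \<in> (\<lambda>c. \<bar>v $ c\<bar>) ` {..<m}" unfolding a_def using mpos
        by (intro Max_in) auto
      then show ?thesis unfolding S_def by auto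
    qed
    have finS: "finite S" unfolding S_def by simp
    define r where "r = Max S"
    have rS: "r \<in> S" unfolding r_def using finS \<open>S \<noteq> {}\<close> by (rule Max_in)
    have rm: "r < m" and ra: "\<bar>w r\<bar> = a" using rS unfolding S_def w_def by auto
    have rmax: "c \<notin> S" if "r < c" for c using that finS unfolding r_def
      using Max_ge leD by blast
    obtain c0 where c0: "r < c0" "c0 \<le> m" "B$$(r,c0) < 0" using up[OF rm] by blast
    define s where "s = sgn (w r)"
    have sw: "s * w r = a" unfolding s_def using ra apos
      by (metis abs_sgn mult.commute)
    have ss: "\<bar>s\<bar> = 1" unfolding s_def using ra apos by (simp add: abs_sgn_eq)
    have roweq: "(\<Sum>c<Suc m. B$$(r,c) * w c) = 0"
    proof -
      have "(Mm *\<^sub>v v) $ r = 0" using v rm by simp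
      moreover have "(Mm *\<^sub>v v) $ r = (\<Sum>c<m. B$$(r,c) * v $ c)"
        using Mc v(1) rm Mi by (simp add: scalar_prod_def lessThan_atLeast0 mult.commute)
      moreover have "(\<Sum>c<Suc m. B$$(r,c) * w c) = (\<Sum>c<m. B$$(r,c) * v $ c)"
        by (simp add: w_def)
      ultimately show ?thesis by simp
    qed
    have "(\<Sum>c<Suc m. B$$(r,c) * (s * w c - a)) = s * (\<Sum>c<Suc m. B$$(r,c) * w c) - a * (\<Sum>c<Suc m. B$$(r,c))"
      by (simp add: algebra_simps sum_subtractf sum_distrib_left)
    also have "\<dots> = 0" using roweq rowsum[of r] rm by simp
    finally have z: "(\<Sum>c<Suc m. B$$(r,c) * (s * w c - a)) = 0" .
    have le: "s * w c - a \<le> 0" for c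
    proof -
      have "s * w c \<le> \<bar>s * w c\<bar>" by simp
      also have "\<dots> = \<bar>w c\<bar>" using ss by (simp add: abs_mult)
      finally show ?thesis using a_ge[of c] by simp
    qed
    have "(\<Sum>c<Suc m. B$$(r,c) * (s * w c - a)) > 0"
    proof (rule sum_pos2[of _ c0])
      show "finite {..<Suc m}" by simp
      show "c0 \<in> {..<Suc m}" using c0 by simp
      have "s * w c0 - a < 0"
      proof (cases "c0 < m")
        case True
        then have "c0 \<notin> S" using rmax c0 by simp
        then have "\<bar>v $ c0\<bar> \<noteq> a" using True unfolding S_def by simp
        then have "\<bar>w c0\<bar> < a" using a_ge[of c0] True unfolding w_def by simp
        moreover have "s * w c0 \<le> \<bar>w c0\<bar>" using ss
          by (metis abs_ge_self abs_mult mult_1)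
        ultimately show ?thesis by simp
      next
        case False
        then show ?thesis using apos unfolding w_def by simp
      qed
      then show "0 < B$$(r,c0) * (s * w c0 - a)" using c0 by (simp add: mult_neg_neg)
      fix c assume c: "c \<in> {..<Suc m}"
      show "0 \<le> B$$(r,c) * (s * w c - a)"
      proof (cases "c = r")
        case True then show ?thesis using sw by simp
      next
        case False
        then show ?thesis using offd[of r c] c rm le[of c]
          by (simp add: mult_nonpos_nonpos)
      qed
    qed
    then show False using z by simp
  qed
  then have "card {j. j < Suc m \<and> j \<in> {..<m}} \<le> rank B"
    using rank_gt_minor[OF B] unfolding Mm_def by blast
  then show ?thesis using upper cardm by simp
qed



lemma reindex_pairs:
  fixes p :: nat assumes "p > 0"
  shows "(\<Sum>c<p^2. g (c div p + 1, c mod p + 1)) = (\<Sum>x\<in>{1..p}\<times>{1..p}. g x)"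
proof (rule sum.reindex_bij_betw)
  show "bij_betw (\<lambda>c. (c div p + 1, c mod p + 1)) {..<p^2} ({1..p}\<times>{1..p})"
  proof (rule bij_betw_imageI)
    show "inj_on (\<lambda>c. (c div p + 1, c mod p + 1)) {..<p^2}"
      by (intro inj_onI) (metis Pair_inject add_right_cancel div_mod_decomp)
    show "(\<lambda>c. (c div p + 1, c mod p + 1)) ` {..<p^2} = {1..p}\<times>{1..p}"
    proof
      show "(\<lambda>c. (c div p + 1, c mod p + 1)) ` {..<p^2} \<subseteq> {1..p}\<times>{1..p}"
        using assms by (auto simp: power2_eq_square less_mult_imp_div_less Suc_leI)
      show "{1..p}\<times>{1..p} \<subseteq> (\<lambda>c. (c div p + 1, c mod p + 1)) ` {..<p^2}"
      proof
        fix x assume x: "x \<in> {1..p}\<times>{1..p}"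
        obtain i j where ij: "x = (i,j)" "1 \<le> i" "i \<le> p" "1 \<le> j" "j \<le> p" using x by auto
        define c where "c = (i-1)*p + (j-1)"
        have j1: "j - 1 < p" using ij by simp
        have "(i-1)*p + p = i*p" using ij(2) by (cases i) auto
        moreover have "i*p \<le> p*p" using ij by simp
        ultimately have "c < p^2" unfolding c_def power2_eq_square using j1 by linarith
        moreover have "c div p = i - 1" unfolding c_def using j1 assms by simp
        moreover have "c mod p = j - 1" unfolding c_def using j1 assms by simp
        ultimately show "x \<in> (\<lambda>c. (c div p + 1, c mod p + 1)) ` {..<p^2}"
          using ij by (intro image_eqI[of _ _ c]) auto
      qed
    qed
  qed
qed

lemma coeffA_decomp:
  assumes "1 \<le> k" "k \<le> p" "1 \<le> l" "l \<le> p" and xS: "x \<in> {1..p}\<times>{1..p}"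
  shows "coeffA p t u (fst x) (snd x) k l =
     (if x = (k,l) then cc t k l + iv (k > 1) + iv (l > 1) + u * iv (k < p) + u * iv (l < p) else 0)
   - (if x = (l,k) then dd t l k else 0)
   - (if x = (k-1,l) then iv (k > 1) else 0)
   - (if x = (k,l-1) then iv (l > 1) else 0)
   - (if x = (k+1,l) then u else 0)
   - (if x = (k,l+1) then u else 0)"
proof -
  obtain i j where x: "x = (i,j)" by (cases x)
  have ij: "1 \<le> i" "1 \<le> j" using xS x by auto
  have e1: "iv (k = i \<and> l = j) * (cc t i j + iv (i > 1) + iv (j > 1) + u * iv (i < p) + u * iv (j < p))
     = (if x = (k,l) then cc t k l + iv (k > 1) + iv (l > 1) + u * iv (k < p) + u * iv (l < p) else 0)"
    unfolding x iv_def by auto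
  have e2: "iv (k = j \<and> l = i) * dd t i j = (if x = (l,k) then dd t l k else 0)"
    unfolding x iv_def by auto
  have e3: "iv (i < p \<and> k = i + 1 \<and> l = j) = iv (k > 1) * (if x = (k-1,l) then 1 else 0)"
    unfolding x iv_def using assms ij by auto
  have e4: "iv (j < p \<and> k = i \<and> l = j + 1) = iv (l > 1) * (if x = (k,l-1) then 1 else 0)"
    unfolding x iv_def using assms ij by auto
  have e5: "iv (i > 1 \<and> k + 1 = i \<and> l = j) = (if x = (k+1,l) then 1 else 0)"
    unfolding x iv_def using assms ij by auto
  have e6: "iv (j > 1 \<and> k = i \<and> l + 1 = j) = (if x = (k,l+1) then 1 else 0)"
    unfolding x iv_def using assms ij by auto
  have e3': "(if x = (k-1,l) then iv (k > 1) else 0) = iv (k > 1) * (if x = (k-1,l) then 1 else 0)" by simp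
  have e4': "(if x = (k,l-1) then iv (l > 1) else 0) = iv (l > 1) * (if x = (k,l-1) then 1 else 0)" by simp
  have e5': "(if x = (k+1,l) then u else 0) = u * (if x = (k+1,l) then 1 else 0)" by simp
  have e6': "(if x = (k,l+1) then u else 0) = u * (if x = (k,l+1) then 1 else 0)" by simp
  show ?thesis unfolding e3' e4' e5' e6' coeffA_def e1[symmetric] e2[symmetric] e3[symmetric] e4[symmetric]
      e5[symmetric] e6[symmetric] unfolding x by simp
qed

lemma rowsum_pairs:
  assumes "1 \<le> k" "k \<le> p" "1 \<le> l" "l \<le> p"
  shows "(\<Sum>x\<in>{1..p}\<times>{1..p}. coeffA p t u (fst x) (snd x) k l) = 0"
proof -
  let ?S = "{1..p}\<times>{1..p}"
  have "(\<Sum>x\<in>?S. coeffA p t u (fst x) (snd x) k l) = (\<Sum>x\<in>?S.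
     (if x = (k,l) then cc t k l + iv (k > 1) + iv (l > 1) + u * iv (k < p) + u * iv (l < p) else 0)
   - (if x = (l,k) then dd t l k else 0)
   - (if x = (k-1,l) then iv (k > 1) else 0)
   - (if x = (k,l-1) then iv (l > 1) else 0)
   - (if x = (k+1,l) then u else 0)
   - (if x = (k,l+1) then u else 0))"
    by (rule sum.cong) (simp_all only: coeffA_decomp[OF assms])
  also have "\<dots> =
     (cc t k l + iv (k > 1) + iv (l > 1) + u * iv (k < p) + u * iv (l < p))
     - dd t l k - iv (k > 1) - iv (l > 1) - u * iv (k < p) - u * iv (l < p)"
  proof -
    have fin: "finite ?S" by simp
    have s1: "(\<Sum>x\<in>?S. if x = (k,l) then cc t k l + iv (k > 1) + iv (l > 1) + u * iv (k < p) + u * iv (l < p) else 0)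
        = cc t k l + iv (k > 1) + iv (l > 1) + u * iv (k < p) + u * iv (l < p)"
      using assms by (subst sum.delta[OF fin]) simp
    have s2: "(\<Sum>x\<in>?S. if x = (l,k) then dd t l k else 0) = dd t l k"
      using assms by (subst sum.delta[OF fin]) simp
    have s3: "(\<Sum>x\<in>?S. if x = (k-1,l) then iv (k > 1) else 0) = iv (k > 1)"
      using assms by (subst sum.delta[OF fin]) (auto simp: iv_def)
    have s4: "(\<Sum>x\<in>?S. if x = (k,l-1) then iv (l > 1) else 0) = iv (l > 1)"
      using assms by (subst sum.delta[OF fin]) (auto simp: iv_def)
    have s5: "(\<Sum>x\<in>?S. if x = (k+1,l) then u else 0) = u * iv (k < p)"
      using assms by (subst sum.delta[OF fin]) (auto simp: iv_def)
    have s6: "(\<Sum>x\<in>?S. if x = (k,l+1) then u else 0) = u * iv (l < p)"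
      using assms by (subst sum.delta[OF fin]) (auto simp: iv_def)
    show ?thesis by (simp only: sum_subtractf s1 s2 s3 s4 s5 s6)
  qed
  also have "\<dots> = 0" unfolding cc_def dd_def iv_def by auto
  finally show ?thesis .
qed


lemma iv_nonneg: "iv b \<ge> 0" unfolding iv_def by simp

lemma dd_nonneg: "t \<ge> 0 \<Longrightarrow> dd t i j \<ge> 0" unfolding dd_def by simp

lemma coeffA_offd:
  assumes "(i,j) \<noteq> (k,l)" "t \<ge> 0" "u > 0"
  shows "coeffA p t u i j k l \<le> 0"
proof -
  have z: "iv (k = i \<and> l = j) = 0" using assms(1) unfolding iv_def by auto
  have "0 \<le> iv (k = j \<and> l = i) * dd t i j" using iv_nonneg dd_nonneg[OF assms(2)] by simp
  moreover have "0 \<le> u * iv (i > 1 \<and> k + 1 = i \<and> l = j)" using iv_nonneg assms(3) by simp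
  moreover have "0 \<le> u * iv (j > 1 \<and> k = i \<and> l + 1 = j)" using iv_nonneg assms(3) by simp
  moreover have "0 \<le> iv (i < p \<and> k = i + 1 \<and> l = j)" by (rule iv_nonneg)
  moreover have "0 \<le> iv (j < p \<and> k = i \<and> l = j + 1)" by (rule iv_nonneg)
  ultimately show ?thesis unfolding coeffA_def z by linarith
qed

lemma matB_entry:
  "r < p^2 \<Longrightarrow> c < p^2 \<Longrightarrow> matB p t u $$ (r,c) =
     coeffA p t u (c div p + 1) (c mod p + 1) (r div p + 1) (r mod p + 1)"
  unfolding matB_def by (subst index_mat) auto

lemma matB_carrier: "matB p t u \<in> carrier_mat (p^2) (p^2)"
  unfolding matB_def by (rule mat_carrier)
lemma iv_F: "\<not> b \<Longrightarrow> iv b = 0" unfolding iv_def by simp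
lemma iv_T: "b \<Longrightarrow> iv b = 1" unfolding iv_def by simp

lemma up_val1: assumes "l \<ge> 1" shows "coeffA p t u k (l+1) k l = - u"
proof -
  have "iv (k = k \<and> l = l+1) = 0" by (rule iv_F) simp
  moreover have "iv (k = l+1 \<and> l = k) = 0" by (rule iv_F) simp
  moreover have "iv (k < p \<and> k = k + 1 \<and> l = l+1) = 0" by (rule iv_F) simp
  moreover have "iv (l+1 < p \<and> k = k \<and> l = l+1 + 1) = 0" by (rule iv_F) simp
  moreover have "iv (k > 1 \<and> k + 1 = k \<and> l = l+1) = 0" by (rule iv_F) simp
  moreover have "iv (l+1 > 1 \<and> k = k \<and> l + 1 = l+1) = 1" by (rule iv_T) (use assms in simp)
  ultimately show ?thesis unfolding coeffA_def by simp
qed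

lemma up_val2: assumes "k \<ge> 1" shows "coeffA p t u (k+1) l k l = - u"
proof -
  have "iv (k = k+1 \<and> l = l) = 0" by (rule iv_F) simp
  moreover have "iv (k = l \<and> l = k+1) = 0" by (rule iv_F) simp
  moreover have "iv (k+1 < p \<and> k = k+1 + 1 \<and> l = l) = 0" by (rule iv_F) simp
  moreover have "iv (l < p \<and> k = k+1 \<and> l = l + 1) = 0" by (rule iv_F) simp
  moreover have "iv (k+1 > 1 \<and> k + 1 = k+1 \<and> l = l) = 1" by (rule iv_T) (use assms in simp)
  moreover have "iv (l > 1 \<and> k = k+1 \<and> l + 1 = l) = 0" by (rule iv_F) simp
  ultimately show ?thesis unfolding coeffA_def by simp
qed


theorem mainTheorem4:
  fixes p :: nat and t u :: real
  assumes "p \<ge> 2" and "0 \<le> t" and "t \<le> 1" and "u > 0"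
  shows "vec_space.rank (p^2) (matB p t u) = p^2 - 1"
proof -
  define m where "m = p^2 - 1"
  have pp: "p^2 \<ge> 4" using assms(1) power_mono[of 2 p 2] by simp
  have Sm: "Suc m = p^2" unfolding m_def using pp by simp
  have p0: "p > 0" using assms(1) by simp
  let ?B = "matB p t u"
  have kl: "x div p + 1 \<le> p" "x mod p + 1 \<le> p" if "x < p^2" for x
  proof -
    show "x div p + 1 \<le> p" using that p0
      by (simp add: power2_eq_square less_mult_imp_div_less Suc_leI)
    show "x mod p + 1 \<le> p" using p0 by (simp add: Suc_leI)
  qed
  have "vec_space.rank (Suc m) ?B = m"
  proof (rule gen_rank)
    show "?B \<in> carrier_mat (Suc m) (Suc m)" unfolding Sm by (rule matB_carrier)
    fix r assume r: "r < Suc m"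
    then have r': "r < p^2" using Sm by simp
    {
      fix c assume c: "c < Suc m" "c \<noteq> r"
      then have c': "c < p^2" using Sm by simp
      have "(c div p + 1, c mod p + 1) \<noteq> (r div p + 1, r mod p + 1)"
      proof
        assume "(c div p + 1, c mod p + 1) = (r div p + 1, r mod p + 1)"
        then have "c div p = r div p" "c mod p = r mod p" by auto
        then have "c = r" by (metis div_mult_mod_eq)
        with c show False by simp
      qed
      then show "?B $$ (r,c) \<le> 0" unfolding matB_entry[OF r' c']
        using coeffA_offd assms by blast
    }
    show "(\<Sum>c<Suc m. ?B $$ (r,c)) = 0"
    proof -
      have "(\<Sum>c<Suc m. ?B $$ (r,c)) = (\<Sum>c<p^2. (\<lambda>x. coeffA p t u (fst x) (snd x) (r div p + 1) (r mod p + 1)) (c div p + 1, c mod p + 1))"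
        unfolding Sm by (rule sum.cong) (simp_all add: matB_entry r')
      also have "\<dots> = (\<Sum>x\<in>{1..p}\<times>{1..p}. coeffA p t u (fst x) (snd x) (r div p + 1) (r mod p + 1))"
        by (rule reindex_pairs[OF p0])
      also have "\<dots> = 0" by (rule rowsum_pairs) (use kl[OF r'] in auto)
      finally show ?thesis .
    qed
  next
    fix r assume r: "r < m"
    then have r': "r < p^2" using Sm by simp
    have rdec: "r = (r div p) * p + r mod p" by simp
    show "\<exists>c. r < c \<and> c \<le> m \<and> ?B $$ (r,c) < 0"
    proof (cases "r mod p + 1 < p")
      case True
      define c where "c = r + 1"
      have e: "c = (r mod p + 1) + (r div p) * p" unfolding c_def using rdec by linarith
      have d1: "c div p = r div p + (r mod p + 1) div p" unfolding e
        by (rule div_mult_self1) (use p0 in simp)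
      have d2: "c mod p = (r mod p + 1) mod p" unfolding e by (rule mod_mult_self1)
      have cd: "c div p = r div p" "c mod p = r mod p + 1"
        using d1 d2 True by simp_all
      have "c \<le> m" using r unfolding c_def by simp
      moreover have "c < p^2" using r Sm unfolding c_def by simp
      ultimately show ?thesis using up_val1[of "r mod p + 1" p t u "r div p + 1"] assms(4)
        by (intro exI[of _ c]) (simp add: matB_entry r' cd, simp add: c_def)
    next
      case False
      then have lm: "r mod p + 1 = p" using kl[OF r'] by simp
      define c where "c = r + p"
      have cd: "c div p = r div p + 1" "c mod p = r mod p" unfolding c_def using p0 by simp_all
      define k where "k = r div p"
      have e: "r = k * p + (p - 1)" using rdec lm unfolding k_def by linarith
      have "k * p + (p - 1) < p * p - 1" using r e unfolding m_def power2_eq_square by linarith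
      then have "k * p < (p - 1) * p" using p0 by (simp add: diff_mult_distrib)
      then have "k < p - 1" by (rule mult_less_cancel2[THEN iffD1, THEN conjunct2])
      then have "(k + 1) * p \<le> (p - 1) * p" by (intro mult_le_mono1) simp
      moreover have "c = (k+1) * p + (p - 1)" unfolding c_def using e by simp
      moreover have "(p - 1) * p + (p - 1) = p * p - 1" using p0 by (cases p) (auto simp: algebra_simps)
      ultimately have "c \<le> p * p - 1" by linarith
      then have "c \<le> m" unfolding m_def power2_eq_square .
      moreover have "c < p^2" using \<open>c \<le> m\<close> Sm by simp
      ultimately show ?thesis using up_val2[of "r div p + 1" p t u "r mod p + 1"] assms(4) p0
        by (intro exI[of _ c]) (simp add: matB_entry r' cd, simp add: c_def)
    qed
  qed
  then show ?thesis using Sm m_def by simp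
qed

end
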